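(* Let $(M,\Sigma_M,\mu,T_t)$ be a measure-preserving deterministic system. Then the following two conditions are equivalent: (a) there do not exist $n\in\mathbb{R}^{+}$ and $C\in\Sigma_M$ with $0<\mu(C)<1$ such that $T_n(C)=C$ except for a set of $\mu$-measure zero; (b) for every nontrivial finite-valued observation function $\Phi:M\to M_O$ and every $k\in\mathbb{R}^{+}$, the stochastic process $\{Z_t;\,t\in\mathbb{R}\}:=\{\Phi\circ T_t;\,t\in\mathbb{R}\}$ (random variables on $(M,\Sigma_M,\mu)$) has values $o_i,o_j\in M_O$ with $$0<P\{Z_{t+k}=o_j\mid Z_t=o_i\}<1 .$$
   Context: A (continuous-time) deterministic system is a quadruple $(M,\Sigma_M,\mu,T_t)$ where $(M,\Sigma_M,\mu)$ is a probability space and $T_t:M\to M$, $t\in\mathbb{R}$, are measurable maps with $T_{t_1+t_2}(m)=T_{t_2}(T_{t_1}(m))$ for all $m\in M$ and $t_1,t_2\in\mathbb{R}$, and with $(t,m)\mapsto T_t(m)$ jointly measurable. It is measure-preserving if $\mu(T_t(A))=\mu(A)$ for all $A\in\Sigma_M$ and all $t\in\mathbb{R}$. An observation function is a measurable map $\Phi:M\to M_O$ into a measurable space. It is finite-valued if it takes only finitely many values $o_1,\dots,o_r$ and $\mu(\{m:\Phi(m)=o_i\})>0$ for each $i$; it is nontrivial if $r\ge 2$. Here $P\{Z_{t+k}=o_j\mid Z_t=o_i\}=\mu(\{m:\Phi(T_{t+k}m)=o_j,\ \Phi(T_t m)=o_i\})/\mu(\{m:\Phi(T_t m)=o_i\})$.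 *)

theory Defs
  imports "HOL-Probability.Probability"
begin

definition det_system :: "'a measure \<Rightarrow> (real \<Rightarrow> 'a \<Rightarrow> 'a) \<Rightarrow> bool" where
  "det_system M T \<longleftrightarrow>
     prob_space M \<and>
     (\<forall>t. T t \<in> M \<rightarrow>\<^sub>M M) \<and>
     (\<forall>t1 t2. \<forall>m\<in>space M. T (t1 + t2) m = T t2 (T t1 m)) \<and>
     (\<lambda>(t, m). T t m) \<in> borel \<Otimes>\<^sub>M M \<rightarrow>\<^sub>M M"

definition measure_preserving_system :: "'a measure \<Rightarrow> (real \<Rightarrow> 'a \<Rightarrow> 'a) \<Rightarrow> bool" where
  "measure_preserving_system M T \<longleftrightarrow>
     det_system M T \<and>
     (\<forall>A\<in>sets M. \<forall>t. T t ` A \<in> sets M \<and> emeasure M (T t ` A) = emeasure M A)"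

definition finite_valued_obs :: "'a measure \<Rightarrow> 'b measure \<Rightarrow> ('a \<Rightarrow> 'b) \<Rightarrow> bool" where
  "finite_valued_obs M MO \<Phi> \<longleftrightarrow>
     \<Phi> \<in> M \<rightarrow>\<^sub>M MO \<and> finite (\<Phi> ` space M) \<and>
     (\<forall>v\<in>\<Phi> ` space M. {m\<in>space M. \<Phi> m = v} \<in> sets M \<and>
                         measure M {m\<in>space M. \<Phi> m = v} > 0)"

definition nontrivial_obs :: "'a measure \<Rightarrow> 'b measure \<Rightarrow> ('a \<Rightarrow> 'b) \<Rightarrow> bool" where
  "nontrivial_obs M MO \<Phi> \<longleftrightarrow> finite_valued_obs M MO \<Phi> \<and> card (\<Phi> ` space M) \<ge> 2"

definition trans_prob ::
  "'a measure \<Rightarrow> (real \<Rightarrow> 'a \<Rightarrow> 'a) \<Rightarrow> ('a \<Rightarrow> 'b) \<Rightarrow> real \<Rightarrow> real \<Rightarrow> 'b \<Rightarrow> 'b \<Rightarrow> real" where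
  "trans_prob M T \<Phi> t k oi oj =
     measure M {m\<in>space M. \<Phi> (T (t + k) m) = oj \<and> \<Phi> (T t m) = oi}
     / measure M {m\<in>space M. \<Phi> (T t m) = oi}"

end

theory Submission
  imports Defs
begin

locale mps =
  fixes M :: "'a measure" and T :: "real \<Rightarrow> 'a \<Rightarrow> 'a"
  assumes mps: "measure_preserving_system M T"
begin

lemma ps: "prob_space M" using mps by (simp add: measure_preserving_system_def det_system_def)
sublocale prob_space M by (rule ps)

lemma Tmeas: "T t \<in> M \<rightarrow>\<^sub>M M"
  using mps by (simp add: measure_preserving_system_def det_system_def)
lemma Tcomp: "m \<in> space M \<Longrightarrow> T (t1+t2) m = T t2 (T t1 m)"
  using mps by (simp add: measure_preserving_system_def det_system_def)
lemma Timg_sets: "A \<in> sets M \<Longrightarrow> T t ` A \<in> sets M"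
  using mps by (simp add: measure_preserving_system_def)
lemma Timg_measure: "A \<in> sets M \<Longrightarrow> measure M (T t ` A) = measure M A"
  using mps by (simp add: measure_preserving_system_def measure_def)
lemma Tspace: "m \<in> space M \<Longrightarrow> T t m \<in> space M"
  by (rule measurable_space[OF Tmeas])

lemma nullI: "X \<in> sets M \<Longrightarrow> measure M X = 0 \<Longrightarrow> X \<in> null_sets M"
  by (simp add: null_setsI emeasure_eq_measure)

definition pre where "pre t B = T t -` B \<inter> space M"

lemma pre_sets: "B \<in> sets M \<Longrightarrow> pre t B \<in> sets M"
  unfolding pre_def by (metis Tmeas measurable_sets)

lemma pre_measure: assumes "B \<in> sets M" shows "measure M (pre t B) = measure M B"
proof -
  have le: "measure M (pre t C) \<le> measure M C" if "C \<in> sets M" for C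
  proof -
    have "measure M (pre t C) = measure M (T t ` pre t C)" using Timg_measure pre_sets that by simp
    also have "\<dots> \<le> measure M C" apply (rule finite_measure_mono) using that by (auto simp: pre_def)
    finally show ?thesis .
  qed
  have "pre t (space M - B) = space M - pre t B" by (auto simp: pre_def Tspace)
  then have "measure M (space M - pre t B) \<le> measure M (space M - B)"
    using le[of "space M - B"] assms by auto
  then have "1 - measure M (pre t B) \<le> 1 - measure M B" using prob_compl pre_sets assms by simp
  with le[OF assms] show ?thesis by simp
qed

lemma chain:
  assumes "X \<in> sets M" "Y \<in> sets M" "Z \<in> sets M"
    "measure M (X - pre s Y) = 0" "measure M (Y - pre t Z) = 0"
  shows "measure M (X - pre (s+t) Z) = 0"
proof -
  have X: "X \<subseteq> space M" using assms(1) sets.sets_into_space by blast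
  have YZ: "Y - pre t Z \<in> sets M" by (intro sets.Diff pre_sets assms)
  have "X - pre (s+t) Z \<subseteq> (X - pre s Y) \<union> pre s (Y - pre t Z)"
    using X by (auto simp: pre_def Tcomp Tspace)
  then have "measure M (X - pre (s+t) Z) \<le> measure M ((X - pre s Y) \<union> pre s (Y - pre t Z))"
    by (intro finite_measure_mono) (auto intro!: pre_sets assms)
  also have "\<dots> \<le> measure M (X - pre s Y) + measure M (pre s (Y - pre t Z))"
    by (intro measure_Un_le) (auto intro!: pre_sets assms)
  also have "\<dots> = 0" using assms pre_measure[OF YZ, of s] by simp
  finally show ?thesis by (simp add: measure_le_0_iff)
qed

lemma trans_prob_eq:
  assumes "{m\<in>space M. \<Phi> m = i} \<in> sets M" "{m\<in>space M. \<Phi> m = j} \<in> sets M"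
  shows "trans_prob M T \<Phi> t k i j =
    measure M (pre k {m\<in>space M. \<Phi> m = j} \<inter> {m\<in>space M. \<Phi> m = i}) / measure M {m\<in>space M. \<Phi> m = i}"
proof -
  have e1: "{m\<in>space M. \<Phi> (T (t + k) m) = j \<and> \<Phi> (T t m) = i}
      = pre t (pre k {m\<in>space M. \<Phi> m = j} \<inter> {m\<in>space M. \<Phi> m = i})"
    by (auto simp: pre_def Tcomp Tspace)
  have e2: "{m\<in>space M. \<Phi> (T t m) = i} = pre t {m\<in>space M. \<Phi> m = i}"
    by (auto simp: pre_def Tspace)
  show ?thesis unfolding trans_prob_def e1 e2
    by (subst pre_measure, auto intro!: pre_sets assms simp: pre_measure assms)
qed

lemma dir1:
  fixes x y :: 'b
  assumes xy: "x \<noteq> y" and n: "n > 0" and C: "C \<in> sets M" "0 < measure M C" "measure M C < 1"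
    and inv: "(T n ` C - C) \<union> (C - T n ` C) \<in> null_sets M"
  shows "\<exists>(MO :: 'b measure) \<Phi>. nontrivial_obs M MO \<Phi> \<and>
        \<not> (\<forall>k>0. \<exists>oi\<in>\<Phi> ` space M. \<exists>oj\<in>\<Phi> ` space M.
           \<forall>t. 0 < trans_prob M T \<Phi> t k oi oj \<and> trans_prob M T \<Phi> t k oi oj < 1)"
proof -
  let ?S = "space M"
  have CS: "C \<subseteq> ?S" using C(1) sets.sets_into_space by blast
  have pC: "pre n C \<in> sets M" using pre_sets C(1) .
  have TC: "T n ` C \<in> sets M" using Timg_sets C(1) .
  have nul0: "T n ` C - C \<in> null_sets M"
    by (rule null_sets_subset[OF inv]) (use TC C(1) in auto)
  have "C - pre n C \<subseteq> pre n (T n ` C - C)" using CS by (auto simp: pre_def Tspace)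
  then have "measure M (C - pre n C) \<le> measure M (pre n (T n ` C - C))"
    by (intro finite_measure_mono pre_sets) (use TC C(1) in auto)
  also have "\<dots> = 0" using pre_measure[of "T n ` C - C" n] TC C(1) measure_eq_0_null_sets[OF nul0] by auto
  finally have null1: "measure M (C - pre n C) = 0" by (simp add: measure_le_0_iff)
  have i1: "measure M (C \<inter> pre n C) = measure M C"
    using finite_measure_Diff'[OF C(1) pC] null1 by simp
  have null2: "measure M (pre n C - C) = 0"
    using finite_measure_Diff'[OF pC C(1)] i1 pre_measure[OF C(1), of n] by (simp add: Int_commute)
  have compl: "measure M (?S - C) = 1 - measure M C" using prob_compl C(1) by simp
  define \<Phi> where "\<Phi> m = (if m \<in> C then x else y)" for m
  have Ax: "{m\<in>?S. \<Phi> m = x} = C" using CS xy by (auto simp: \<Phi>_def)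
  have Ay: "{m\<in>?S. \<Phi> m = y} = ?S - C" using xy by (auto simp: \<Phi>_def)
  have Cne: "C \<noteq> {}" using C(2) by auto
  have SCne: "?S - C \<noteq> {}"
  proof
    assume "?S - C = {}"
    then have "C = ?S" using CS by auto
    then show False using C(3) prob_space by simp
  qed
  have img: "\<Phi> ` ?S = {x, y}" using Cne SCne CS by (auto simp: \<Phi>_def)
  have meas: "\<Phi> \<in> M \<rightarrow>\<^sub>M count_space UNIV"
    unfolding \<Phi>_def by (rule measurable_If_set) (use C(1) CS in \<open>auto simp: Int_absorb2\<close>)
  have SCs: "?S - C \<in> sets M" using C(1) by auto
  have nt: "nontrivial_obs M (count_space UNIV) \<Phi>"
  proof -
    have f1: "finite (\<Phi> ` ?S)" by (simp add: img)
    have f2: "\<forall>v\<in>\<Phi> ` ?S. {m\<in>?S. \<Phi> m = v} \<in> sets M \<and> measure M {m\<in>?S. \<Phi> m = v} > 0"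
    proof
      fix v assume "v \<in> \<Phi> ` ?S"
      then have "v = x \<or> v = y" by (simp add: img)
      then show "{m\<in>?S. \<Phi> m = v} \<in> sets M \<and> measure M {m\<in>?S. \<Phi> m = v} > 0"
      proof
        assume "v = x" then show ?thesis using Ax C(1) C(2) by simp
      next
        assume "v = y" then show ?thesis using Ay SCs compl C(3) by simp
      qed
    qed
    have f3: "card (\<Phi> ` ?S) \<ge> 2" using xy by (simp add: img)
    show ?thesis unfolding nontrivial_obs_def finite_valued_obs_def using meas f1 f2 f3 by blast
  qed
  have Asets: "{m\<in>?S. \<Phi> m = v} \<in> sets M" for v
  proof -
    have "{m\<in>?S. \<Phi> m = v} = (if v = x then C else if v = y then ?S - C else {})"
      using CS xy by (auto simp: \<Phi>_def)
    then show ?thesis using C(1) by auto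
  qed
  have preSC: "pre n (?S - C) = ?S - pre n C" by (auto simp: pre_def Tspace)
  have key: "trans_prob M T \<Phi> 0 n oi oj \<in> {0, 1}" if "oi \<in> {x,y}" "oj \<in> {x,y}" for oi oj
  proof -
    have tp: "trans_prob M T \<Phi> 0 n oi oj = measure M (pre n {m\<in>?S. \<Phi> m = oj} \<inter> {m\<in>?S. \<Phi> m = oi}) /
          measure M {m\<in>?S. \<Phi> m = oi}" by (rule trans_prob_eq[OF Asets Asets])
    have pos: "measure M (?S - C) > 0" using compl C by simp
    have e1: "(?S - pre n C) \<inter> C = C - pre n C" using CS by auto
    have e2: "pre n C \<inter> (?S - C) = pre n C - C" by (auto simp: pre_def)
    have e3: "(?S - pre n C) \<inter> (?S - C) = (?S - C) - (pre n C - C)" by auto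
    have m3: "measure M ((?S - C) - (pre n C - C)) = measure M (?S - C)"
    proof -
      have sub: "pre n C - C \<subseteq> ?S - C" by (auto simp: pre_def)
      have Bs: "pre n C - C \<in> sets M" using pC C(1) by auto
      show ?thesis by (simp only: finite_measure_Diff[OF SCs Bs sub] null2 diff_zero)
    qed
    have q_xx: "measure M (pre n C \<inter> C) = measure M C" using i1 by (simp add: Int_commute)
    have q_xy: "measure M ((?S - pre n C) \<inter> C) = 0" by (simp only: e1 null1)
    have q_yx: "measure M (pre n C \<inter> (?S - C)) = 0" by (simp only: e2 null2)
    have q_yy: "measure M ((?S - pre n C) \<inter> (?S - C)) = measure M (?S - C)" by (simp only: e3 m3)
    from that have cs: "oi = x \<or> oi = y" "oj = x \<or> oj = y" by auto
    have r_xx: "trans_prob M T \<Phi> 0 n x x = 1"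
      using trans_prob_eq[OF Asets Asets, of 0 n x x] C(2) unfolding Ax by (simp only: q_xx, simp?)
    have r_xy: "trans_prob M T \<Phi> 0 n x y = 0"
      using trans_prob_eq[OF Asets Asets, of 0 n x y] unfolding Ax Ay preSC by (simp only: q_xy, simp?)
    have r_yx: "trans_prob M T \<Phi> 0 n y x = 0"
      using trans_prob_eq[OF Asets Asets, of 0 n y x] unfolding Ax Ay by (simp only: q_yx, simp?)
    have r_yy: "trans_prob M T \<Phi> 0 n y y = 1"
      using trans_prob_eq[OF Asets Asets, of 0 n y y] pos unfolding Ay preSC by (simp only: q_yy, simp?)
    show ?thesis using cs
    proof (elim disjE)
      assume "oi = x" "oj = x" then show ?thesis using r_xx by simp
    next
      assume "oi = x" "oj = y" then show ?thesis using r_xy by simp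
    next
      assume "oi = y" "oj = x" then show ?thesis using r_yx by simp
    next
      assume "oi = y" "oj = y" then show ?thesis using r_yy by simp
    qed
  qed
  show ?thesis
  proof (intro exI conjI notI)
    show "nontrivial_obs M (count_space UNIV) \<Phi>" by (rule nt)
  next
    assume "\<forall>k>0. \<exists>oi\<in>\<Phi> ` space M. \<exists>oj\<in>\<Phi> ` space M.
           \<forall>t. 0 < trans_prob M T \<Phi> t k oi oj \<and> trans_prob M T \<Phi> t k oi oj < 1"
    then have "\<exists>oi\<in>\<Phi> ` space M. \<exists>oj\<in>\<Phi> ` space M.
           \<forall>t. 0 < trans_prob M T \<Phi> t n oi oj \<and> trans_prob M T \<Phi> t n oi oj < 1"
      using n by blast
    then obtain oi oj where "oi \<in> {x,y}" "oj \<in> {x,y}"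
      "\<forall>t. 0 < trans_prob M T \<Phi> t n oi oj \<and> trans_prob M T \<Phi> t n oi oj < 1"
      unfolding img by blast
    moreover have "trans_prob M T \<Phi> 0 n oi oj \<in> {0, 1}" using key calculation by blast
    ultimately show False by (metis insert_iff empty_iff less_irrefl)
  qed
qed


lemma dir2:
  fixes MO :: "'b measure" and \<Phi> :: "'a \<Rightarrow> 'b"
  assumes noinv: "\<not> (\<exists>n>0. \<exists>C\<in>sets M. 0 < measure M C \<and> measure M C < 1 \<and>
                 (T n ` C - C) \<union> (C - T n ` C) \<in> null_sets M)"
    and nt: "nontrivial_obs M MO \<Phi>" and k: "k > 0"
  shows "\<exists>oi\<in>\<Phi> ` space M. \<exists>oj\<in>\<Phi> ` space M.
           \<forall>t. 0 < trans_prob M T \<Phi> t k oi oj \<and> trans_prob M T \<Phi> t k oi oj < 1"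
proof (rule ccontr)
  assume contra: "\<not> ?thesis"
  let ?S = "space M"
  define V where "V = \<Phi> ` ?S"
  define A where "A v = {m\<in>?S. \<Phi> m = v}" for v
  have fin: "finite V" and card: "card V \<ge> 2"
    and Apos: "\<And>v. v \<in> V \<Longrightarrow> measure M (A v) > 0"
    and AsetsV: "\<And>v. v \<in> V \<Longrightarrow> A v \<in> sets M"
    using nt by (auto simp: nontrivial_obs_def finite_valued_obs_def V_def A_def)
  have Asets: "A v \<in> sets M" for v
  proof (cases "v \<in> V")
    case True then show ?thesis by (rule AsetsV)
  next
    case False then have "A v = {}" by (auto simp: A_def V_def)
    then show ?thesis by simp
  qed
  have AS: "A v \<subseteq> ?S" for v by (auto simp: A_def)
  define q where "q i j = measure M (pre k (A j) \<inter> A i)" for i j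
  have tp: "trans_prob M T \<Phi> t k i j = q i j / measure M (A i)" for t i j
    unfolding q_def A_def by (rule trans_prob_eq) (use Asets[unfolded A_def] in auto)
  have q01: "q i j = 0 \<or> q i j = measure M (A i)" if i: "i \<in> V" and j: "j \<in> V" for i j
  proof -
    from contra i j obtain t where nt: "\<not> (0 < trans_prob M T \<Phi> t k i j \<and> trans_prob M T \<Phi> t k i j < 1)"
      unfolding V_def by blast
    have q0: "q i j \<ge> 0" by (simp add: q_def)
    have q1: "q i j \<le> measure M (A i)" unfolding q_def
      by (rule finite_measure_mono) (auto intro: Asets)
    have p: "measure M (A i) > 0" using Apos i .
    from nt have "\<not> (0 < q i j / measure M (A i) \<and> q i j / measure M (A i) < 1)" by (simp add: tp)
    then have "q i j \<le> 0 \<or> q i j \<ge> measure M (A i)" using p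
      by (auto simp: divide_less_eq zero_less_divide_iff not_less)
    then show ?thesis using q0 q1 by auto
  qed
  have ex_sig: "\<exists>j\<in>V. q i j = measure M (A i)" if i: "i \<in> V" for i
  proof (rule ccontr)
    assume "\<not> ?thesis"
    then have z: "\<forall>j\<in>V. q i j = 0" using q01 i by blast
    have sub: "A i \<subseteq> (\<Union>j\<in>V. pre k (A j) \<inter> A i)"
    proof
      fix m assume "m \<in> A i"
      then have m: "m \<in> ?S" "\<Phi> m = i" by (auto simp: A_def)
      show "m \<in> (\<Union>j\<in>V. pre k (A j) \<inter> A i)"
        by (rule UN_I[of "\<Phi> (T k m)"]) (use m Tspace[OF m(1)] in \<open>auto simp: V_def A_def pre_def\<close>)
    qed
    have "measure M (A i) \<le> measure M (\<Union>j\<in>V. pre k (A j) \<inter> A i)"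
      by (rule finite_measure_mono[OF sub]) (use fin in \<open>auto intro!: pre_sets Asets\<close>)
    also have "\<dots> \<le> (\<Sum>j\<in>V. measure M (pre k (A j) \<inter> A i))"
      by (rule finite_measure_subadditive_finite) (use fin in \<open>auto intro!: pre_sets Asets\<close>)
    also have "\<dots> = 0" using z unfolding q_def by simp
    finally show False using Apos[OF i] by simp
  qed
  then obtain \<sigma> where sig: "\<And>i. i \<in> V \<Longrightarrow> \<sigma> i \<in> V \<and> q i (\<sigma> i) = measure M (A i)"
    by metis
  have step: "measure M (A i - pre k (A (\<sigma> i))) = 0" if "i \<in> V" for i
    using finite_measure_Diff'[OF Asets pre_sets[OF Asets], of i k "\<sigma> i"] sig[OF that]
    by (simp add: q_def Int_commute)
  have powV: "(\<sigma> ^^ a) i \<in> V" if "i \<in> V" for a i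
    by (induction a) (use that sig in auto)
  have iter: "measure M (A i - pre (real (Suc a) * k) (A ((\<sigma> ^^ Suc a) i))) = 0" if i: "i \<in> V" for a i
  proof (induction a)
    case 0 then show ?case using step[OF i] by simp
  next
    case (Suc a)
    have "measure M (A i - pre (real (Suc a) * k + k) (A (\<sigma> ((\<sigma> ^^ Suc a) i)))) = 0"
      by (rule chain[OF Asets Asets Asets Suc step[OF powV[OF i]]])
    moreover have "real (Suc a) * k + k = real (Suc (Suc a)) * k" by (simp add: algebra_simps)
    ultimately show ?case by simp
  qed
  from card have "V \<noteq> {}" by auto
  then obtain i0 where i0: "i0 \<in> V" by blast
  define f where "f a = (\<sigma> ^^ a) i0" for a
  have "range f \<subseteq> V" using powV[OF i0] by (auto simp: f_def)
  then have "finite (range f)" using fin finite_subset by blast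
  then have "\<not> inj f" using finite_imageD infinite_UNIV_nat by blast
  then obtain a b where ab: "a \<noteq> b" "f a = f b" unfolding inj_def by blast
  then obtain a b where ab: "a < b" "f a = f b"
    by (metis linorder_neq_iff)
  define i1 where "i1 = f a"
  have i1V: "i1 \<in> V" using powV[OF i0] by (simp add: i1_def f_def)
  define d where "d = b - a - 1"
  have d: "b = a + Suc d" using ab(1) unfolding d_def by simp
  have per: "(\<sigma> ^^ Suc d) i1 = i1"
  proof -
    have "(\<sigma> ^^ Suc d) i1 = (\<sigma> ^^ (Suc d + a)) i0" by (simp add: i1_def f_def funpow_add)
    also have "\<dots> = f b" by (simp add: f_def d add.commute)
    finally show ?thesis using ab(2) by (simp add: i1_def)
  qed
  define C where "C = A i1"
  define n where "n = real (Suc d) * k"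
  have n0: "n > 0" using k by (simp add: n_def)
  have Cs: "C \<in> sets M" by (simp add: C_def Asets)
  have null1: "measure M (C - pre n C) = 0" using iter[OF i1V, of d] per by (simp add: C_def n_def)
  have Cpos: "measure M C > 0" using Apos[OF i1V] by (simp add: C_def)
  have Clt: "measure M C < 1"
  proof -
    have "\<not> V \<subseteq> {i1}"
    proof
      assume "V \<subseteq> {i1}"
      then have "card V \<le> 1" using card_mono[of "{i1}" V] by simp
      with card show False by simp
    qed
    then obtain v where v: "v \<in> V" "v \<noteq> i1" by blast
    have "A v \<subseteq> ?S - C" using v by (auto simp: A_def C_def)
    then have "measure M (A v) \<le> measure M (?S - C)" by (intro finite_measure_mono) (auto simp: Cs)
    also have "\<dots> = 1 - measure M C" using prob_compl Cs by simp
    finally show ?thesis using Apos[OF v(1)] by simp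
  qed
  define D where "D = C \<inter> pre n C"
  have Ds: "D \<in> sets M" by (simp add: D_def Cs pre_sets sets.Int)
  have mD: "measure M D = measure M C"
    using finite_measure_Diff'[OF Cs pre_sets[OF Cs], of n] null1 by (simp add: D_def)
  have TC: "T n ` C \<in> sets M" using Timg_sets Cs .
  have ICs: "C \<inter> T n ` C \<in> sets M" using TC Cs by auto
  have "T n ` D \<subseteq> C \<inter> T n ` C" by (auto simp: D_def pre_def)
  then have "measure M (T n ` D) \<le> measure M (C \<inter> T n ` C)" by (intro finite_measure_mono ICs)
  then have ge: "measure M (C \<inter> T n ` C) \<ge> measure M C" using Timg_measure[OF Ds] mD by simp
  have le1: "measure M (C \<inter> T n ` C) \<le> measure M C" by (intro finite_measure_mono Cs) auto
  have n1: "measure M (C - T n ` C) = 0"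
    using finite_measure_Diff'[OF Cs TC] ge le1 by simp
  have n2: "measure M (T n ` C - C) = 0"
    using finite_measure_Diff'[OF TC Cs] ge le1 Timg_measure[OF Cs, of n] by (simp add: Int_commute)
  have nA: "T n ` C - C \<in> null_sets M" by (rule nullI[OF _ n2]) (intro sets.Diff Cs TC)
  have nB: "C - T n ` C \<in> null_sets M" by (rule nullI[OF _ n1]) (intro sets.Diff Cs TC)
  have nul: "(T n ` C - C) \<union> (C - T n ` C) \<in> null_sets M" by (rule null_sets.Un[OF nA nB])
  have "\<exists>n>0. \<exists>C\<in>sets M. 0 < measure M C \<and> measure M C < 1 \<and>
                 (T n ` C - C) \<union> (C - T n ` C) \<in> null_sets M"
    by (intro exI[of _ n] conjI n0 bexI[of _ C] Cs Cpos Clt nul)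
  then show False using noinv by (rule notE[rotated])
qed

end

theorem theorem1:
  fixes M :: "'a measure" and T :: "real \<Rightarrow> 'a \<Rightarrow> 'a"
  assumes "measure_preserving_system M T"
    and "\<exists>x y :: 'b. x \<noteq> y"
  shows "(\<not> (\<exists>n>0. \<exists>C\<in>sets M. 0 < measure M C \<and> measure M C < 1 \<and>
                 (T n ` C - C) \<union> (C - T n ` C) \<in> null_sets M))
     \<longleftrightarrow>
     (\<forall>(MO :: 'b measure) \<Phi>. nontrivial_obs M MO \<Phi> \<longrightarrow>
        (\<forall>k>0. \<exists>oi\<in>\<Phi> ` space M. \<exists>oj\<in>\<Phi> ` space M.
           \<forall>t. 0 < trans_prob M T \<Phi> t k oi oj \<and> trans_prob M T \<Phi> t k oi oj < 1))"
proof -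
  interpret mps M T by (rule mps.intro) (rule assms(1))
  show ?thesis
  proof (intro iffI allI impI)
    fix MO :: "'b measure" and \<Phi> :: "'a \<Rightarrow> 'b" and k :: real
    assume "\<not> (\<exists>n>0. \<exists>C\<in>sets M. 0 < measure M C \<and> measure M C < 1 \<and>
                 (T n ` C - C) \<union> (C - T n ` C) \<in> null_sets M)" "nontrivial_obs M MO \<Phi>" "k > 0"
    then show "\<exists>oi\<in>\<Phi> ` space M. \<exists>oj\<in>\<Phi> ` space M.
           \<forall>t. 0 < trans_prob M T \<Phi> t k oi oj \<and> trans_prob M T \<Phi> t k oi oj < 1"
      by (rule dir2)
  next
    assume b: "\<forall>(MO :: 'b measure) \<Phi>. nontrivial_obs M MO \<Phi> \<longrightarrow>
        (\<forall>k>0. \<exists>oi\<in>\<Phi> ` space M. \<exists>oj\<in>\<Phi> ` space M.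
           \<forall>t. 0 < trans_prob M T \<Phi> t k oi oj \<and> trans_prob M T \<Phi> t k oi oj < 1)"
    show "\<not> (\<exists>n>0. \<exists>C\<in>sets M. 0 < measure M C \<and> measure M C < 1 \<and>
                 (T n ` C - C) \<union> (C - T n ` C) \<in> null_sets M)"
    proof
      assume "\<exists>n>0. \<exists>C\<in>sets M. 0 < measure M C \<and> measure M C < 1 \<and>
                 (T n ` C - C) \<union> (C - T n ` C) \<in> null_sets M"
      then obtain n C where h: "n > 0" "C \<in> sets M" "0 < measure M C" "measure M C < 1"
        "(T n ` C - C) \<union> (C - T n ` C) \<in> null_sets M" by blast
      obtain x y :: 'b where xy: "x \<noteq> y" using assms(2) by blast
      from dir1[OF xy h] b show False by blast
    qed
  qed
qed

end
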